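(* Let $H$ be a graph and $n$ a positive integer. Then $\mathrm{IR}(H, K_{1,n}) \leq |E(H)|(n-1) + |V(H)|$. Moreover, if $s$ is a positive integer and $H'$ is the blow-up of $H$ with $s$ vertices in each part, then $\mathrm{IR}(H', K_{1,n}) \leq s\big(|E(H)|(n-1)+|V(H)|\big)$.
   Context: All graphs are finite and simple. $K_{1,n}$ denotes the star with $n$ edges. The blow-up of $H$ with $s$ vertices in each part is the graph obtained by replacing each vertex $v$ of $H$ by an independent set $V_v$ of $s$ vertices (the sets pairwise disjoint) and joining $u'\in V_u$ to $v'\in V_v$ if and only if $uv\in E(H)$. For graphs $F$, $H$, $G$, write $F \overset{\text{ind}}{\longrightarrow} (H,G)$ if for every coloring of the edges of $F$ with red and blue there is either a red induced copy of $H$ (a vertex set $S\subseteq V(F)$ with $F[S]\cong H$ and all edges of $F[S]$ red) or a blue induced copy of $G$ (defined analogously with blue). The induced Ramsey number $\mathrm{IR}(H,G)$ is the smallest number of vertices of a graph $F$ with $F \overset{\text{ind}}{\longrightarrow} (H,G)$. *)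

theory Defs
  imports Main
begin

type_synonym 'a graph = "'a set \<times> 'a set set"

definition verts :: "'a graph \<Rightarrow> 'a set" where "verts G = fst G"
definition edges :: "'a graph \<Rightarrow> 'a set set" where "edges G = snd G"

definition graph :: "'a graph \<Rightarrow> bool" where
  "graph G \<longleftrightarrow> finite (verts G) \<and>
     (\<forall>e\<in>edges G. \<exists>u v. e = {u, v} \<and> u \<noteq> v \<and> u \<in> verts G \<and> v \<in> verts G)"

text \<open>Edge colourings: a colouring assigns to each edge a colour (True = red, False = blue).
  There is an induced copy of H in F all of whose edges have colour col.\<close>
definition mono_induced_copy ::
  "'b graph \<Rightarrow> 'a graph \<Rightarrow> ('b set \<Rightarrow> bool) \<Rightarrow> bool \<Rightarrow> bool" where
  "mono_induced_copy F H c col \<longleftrightarrow>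
     (\<exists>f. inj_on f (verts H) \<and> f ` verts H \<subseteq> verts F \<and>
        (\<forall>u\<in>verts H. \<forall>v\<in>verts H. {u, v} \<in> edges H \<longleftrightarrow> {f u, f v} \<in> edges F) \<and>
        (\<forall>u\<in>verts H. \<forall>v\<in>verts H. {f u, f v} \<in> edges F \<longrightarrow> c {f u, f v} = col))"

definition ind_arrows :: "'c graph \<Rightarrow> 'a graph \<Rightarrow> 'b graph \<Rightarrow> bool" where
  "ind_arrows F H G \<longleftrightarrow>
     (\<forall>c :: 'c set \<Rightarrow> bool. mono_induced_copy F H c True \<or> mono_induced_copy F G c False)"

text \<open>Induced Ramsey number: least number of vertices of a graph F (vertices taken
  w.l.o.g. to be natural numbers) with F ind-arrowing (H,G).\<close>
definition IR :: "'a graph \<Rightarrow> 'b graph \<Rightarrow> nat" where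
  "IR H G = (LEAST m. \<exists>F :: nat graph. graph F \<and> card (verts F) = m \<and> ind_arrows F H G)"

definition star :: "nat \<Rightarrow> nat graph" where
  "star n = ({0..n}, {{0, i} | i. i \<in> {1..n}})"

definition blowup :: "'a graph \<Rightarrow> nat \<Rightarrow> ('a \<times> nat) graph" where
  "blowup H s = (verts H \<times> {0..<s},
     {{(u, i), (v, j)} | u v i j. {u, v} \<in> edges H \<and> i < s \<and> j < s})"

end

theory Submission
  imports Defs
begin

definition wblow :: "'a graph \<Rightarrow> ('a \<Rightarrow> nat) \<Rightarrow> ('a \<times> nat) graph" where
  "wblow H w = (SIGMA v:verts H. {..<w v},
     {{(u, i), (v, j)} | u v i j. {u, v} \<in> edges H \<and> i < w u \<and> j < w v})"

lemma no_loop: "graph H \<Longrightarrow> {u, u} \<notin> edges H"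
  unfolding graph_def by (metis doubleton_eq_iff insert_absorb2)

lemma edge_verts: "graph H \<Longrightarrow> {u, v} \<in> edges H \<Longrightarrow> u \<in> verts H \<and> v \<in> verts H \<and> u \<noteq> v"
  unfolding graph_def by (metis doubleton_eq_iff)

lemma wblow_verts: "verts (wblow H w) = (SIGMA v:verts H. {..<w v})"
  by (simp add: wblow_def verts_def)

lemma wblow_edge:
  "{(u, i), (v, j)} \<in> edges (wblow H w) \<longleftrightarrow> {u, v} \<in> edges H \<and> i < w u \<and> j < w v"
proof
  assume "{(u, i), (v, j)} \<in> edges (wblow H w)"
  then obtain u' v' i' j' where e: "{(u, i), (v, j)} = {(u', i'), (v', j')}" and
    h: "{u', v'} \<in> edges H" "i' < w u'" "j' < w v'"
    by (auto simp: wblow_def edges_def)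
  from e have "((u, i) = (u', i') \<and> (v, j) = (v', j')) \<or> ((u, i) = (v', j') \<and> (v, j) = (u', i'))"
    by (simp add: doubleton_eq_iff)
  then show "{u, v} \<in> edges H \<and> i < w u \<and> j < w v"
    using h by (auto simp: insert_commute)
qed (auto simp: wblow_def edges_def)

lemma blowup_eq: "blowup H s = wblow H (\<lambda>_. s)"
  by (simp add: blowup_def wblow_def atLeast0LessThan)

lemma wblow_graph: "graph H \<Longrightarrow> graph (wblow H w)"
proof -
  assume g: "graph H"
  have "finite (verts H)" using g by (simp add: graph_def)
  moreover have "\<exists>p q. e = {p, q} \<and> p \<noteq> q \<and> p \<in> verts (wblow H w) \<and> q \<in> verts (wblow H w)"
    if "e \<in> edges (wblow H w)" for e
  proof -
    from that obtain u v i j where "e = {(u, i), (v, j)}" "{u, v} \<in> edges H" "i < w u" "j < w v"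
      by (auto simp: wblow_def edges_def)
    moreover have "u \<in> verts H" "v \<in> verts H" "u \<noteq> v" using edge_verts[OF g] \<open>{u, v} \<in> edges H\<close> by auto
    ultimately show ?thesis by (intro exI[of _ "(u, i)"] exI[of _ "(v, j)"]) (auto simp: wblow_verts)
  qed
  ultimately show ?thesis by (auto simp: graph_def wblow_verts)
qed

lemma star_verts: "verts (star n) = {0..n}"
  by (simp add: star_def verts_def)

lemma star_edge: "{a, b} \<in> edges (star n) \<longleftrightarrow> (a = 0 \<and> b \<noteq> 0 \<and> b \<le> n) \<or> (b = 0 \<and> a \<noteq> 0 \<and> a \<le> n)"
  by (auto simp: star_def edges_def doubleton_eq_iff)

lemma edge_sub: "graph G \<Longrightarrow> e \<in> edges G \<Longrightarrow> e \<subseteq> verts G"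
proof -
  assume "graph G" "e \<in> edges G"
  then obtain u v where "e = {u, v}" "u \<in> verts G" "v \<in> verts G" unfolding graph_def by meson
  then show ?thesis by simp
qed

lemma mic_transport:
  assumes gF: "graph F" and ig: "inj_on g (verts F)"
    and m: "mono_induced_copy F X (\<lambda>e. c' (g ` e)) col"
  shows "mono_induced_copy (g ` verts F, (`) g ` edges F) X c' col"
proof -
  from m obtain f where f1: "inj_on f (verts X)" and f2: "f ` verts X \<subseteq> verts F"
    and f3: "\<forall>u\<in>verts X. \<forall>v\<in>verts X. {u, v} \<in> edges X \<longleftrightarrow> {f u, f v} \<in> edges F"
    and f4: "\<forall>u\<in>verts X. \<forall>v\<in>verts X. {f u, f v} \<in> edges F \<longrightarrow> c' (g ` {f u, f v}) = col"
    unfolding mono_induced_copy_def by blast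
  have eq: "{g p, g q} \<in> (`) g ` edges F \<longleftrightarrow> {p, q} \<in> edges F"
    if "p \<in> verts F" "q \<in> verts F" for p q
  proof
    assume "{g p, g q} \<in> (`) g ` edges F"
    then obtain e where e: "e \<in> edges F" "g ` e = g ` {p, q}" by auto
    have "e \<subseteq> verts F" using edge_sub[OF gF e(1)] .
    moreover have "{p, q} \<subseteq> verts F" using that by simp
    ultimately have "e = {p, q}" using inj_on_image_eq_iff[OF ig] e(2) by blast
    then show "{p, q} \<in> edges F" using e by simp
  next
    assume "{p, q} \<in> edges F"
    then show "{g p, g q} \<in> (`) g ` edges F" by (rule image_eqI[rotated]) simp
  qed
  show ?thesis unfolding mono_induced_copy_def verts_def[of "(_, _)"] edges_def[of "(_, _)"] fst_conv snd_conv
  proof (intro exI[of _ "g \<circ> f"] conjI ballI)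
    show "inj_on (g \<circ> f) (verts X)"
      using f1 f2 ig by (metis comp_inj_on inj_on_subset)
    show "(g \<circ> f) ` verts X \<subseteq> g ` verts F" using f2 by auto
    fix u v assume uv: "u \<in> verts X" "v \<in> verts X"
    then have fv: "f u \<in> verts F" "f v \<in> verts F" using f2 by auto
    show "({u, v} \<in> edges X) = ({(g \<circ> f) u, (g \<circ> f) v} \<in> (`) g ` edges F)"
      using eq[OF fv] f3 uv by simp
    show "{(g \<circ> f) u, (g \<circ> f) v} \<in> (`) g ` edges F \<longrightarrow> c' {(g \<circ> f) u, (g \<circ> f) v} = col"
      using eq[OF fv] f4 uv by simp
  qed
qed

lemma graph_transport:
  assumes gF: "graph F" and ig: "inj_on g (verts F)"
  shows "graph (g ` verts F, (`) g ` edges F)"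
proof -
  have "\<exists>p q. e' = {p, q} \<and> p \<noteq> q \<and> p \<in> g ` verts F \<and> q \<in> g ` verts F"
    if ee: "e' \<in> (`) g ` edges F" for e'
  proof -
    obtain e where e: "e \<in> edges F" "e' = g ` e" using ee by blast
    then obtain u v where "e = {u, v}" "u \<noteq> v" "u \<in> verts F" "v \<in> verts F"
      using gF unfolding graph_def by blast
    moreover have "g u \<noteq> g v" using ig calculation unfolding inj_on_def by blast
    ultimately show ?thesis using e by (intro exI[of _ "g u"] exI[of _ "g v"]) auto
  qed
  moreover have "finite (g ` verts F)" using gF unfolding graph_def by simp
  ultimately show ?thesis unfolding graph_def verts_def[of "(_, _)"] edges_def[of "(_, _)"] fst_conv snd_conv
    by blast
qed


lemma ind_transport:
  assumes gF: "graph F" and ig: "inj_on g (verts F)" and a: "ind_arrows F X Y"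
  shows "ind_arrows (g ` verts F, (`) g ` edges F) X Y"
  unfolding ind_arrows_def
proof
  fix c'
  from a have "mono_induced_copy F X (\<lambda>e. c' (g ` e)) True \<or> mono_induced_copy F Y (\<lambda>e. c' (g ` e)) False"
    unfolding ind_arrows_def by blast
  then show "mono_induced_copy (g ` verts F, (`) g ` edges F) X c' True \<or>
       mono_induced_copy (g ` verts F, (`) g ` edges F) Y c' False"
    using mic_transport[OF gF ig, of X c' True] mic_transport[OF gF ig, of Y c' False] by blast
qed

lemma blowup1_edge: "{(u, i), (v, j)} \<in> edges (blowup H s) \<longleftrightarrow> {u, v} \<in> edges H \<and> i < s \<and> j < s"
  by (simp add: blowup_eq wblow_edge)

lemma blowup1:
  assumes "ind_arrows F (blowup H 1) Y"
  shows "ind_arrows F H Y"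
  unfolding ind_arrows_def
proof
  fix c
  have sub: "mono_induced_copy F H c True" if "mono_induced_copy F (blowup H 1) c True"
  proof -
    from that obtain f where f1: "inj_on f (verts (blowup H 1))" and f2: "f ` verts (blowup H 1) \<subseteq> verts F"
      and f3: "\<forall>u\<in>verts (blowup H 1). \<forall>v\<in>verts (blowup H 1). {u, v} \<in> edges (blowup H 1) \<longleftrightarrow> {f u, f v} \<in> edges F"
      and f4: "\<forall>u\<in>verts (blowup H 1). \<forall>v\<in>verts (blowup H 1). {f u, f v} \<in> edges F \<longrightarrow> c {f u, f v} = True"
      unfolding mono_induced_copy_def by blast
    have vb: "(u, 0) \<in> verts (blowup H 1) \<longleftrightarrow> u \<in> verts H" for u
      by (simp add: blowup_def verts_def)
    show ?thesis unfolding mono_induced_copy_def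
    proof (intro exI[of _ "\<lambda>u. f (u, 0)"] conjI ballI)
      show "inj_on (\<lambda>u. f (u, 0)) (verts H)"
        using f1 vb unfolding inj_on_def by blast
      show "(\<lambda>u. f (u, 0)) ` verts H \<subseteq> verts F" using f2 vb by blast
      fix u v assume "u \<in> verts H" "v \<in> verts H"
      then have "(u, 0) \<in> verts (blowup H 1)" "(v, 0) \<in> verts (blowup H 1)" using vb by auto
      then show "({u, v} \<in> edges H) = ({f (u, 0), f (v, 0)} \<in> edges F)"
        "{f (u, 0), f (v, 0)} \<in> edges F \<longrightarrow> c {f (u, 0), f (v, 0)} = True"
        using f3 f4 blowup1_edge[of u 0 v 0 H 1] by auto
    qed
  qed
  from assms show "mono_induced_copy F H c True \<or> mono_induced_copy F Y c False"
    unfolding ind_arrows_def using sub by blast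
qed

lemma few_blue:
  assumes g: "graph H" and ux: "{u, x} \<in> edges H" and iu: "i < w u"
    and nb: "\<not> mono_induced_copy (wblow H w) (star n) c False"
  shows "card {j. j < w x \<and> \<not> c {(u, i), (x, j)}} \<le> n - 1"
proof (rule ccontr)
  let ?B = "{j. j < w x \<and> \<not> c {(u, i), (x, j)}}"
  assume "\<not> card ?B \<le> n - 1"
  then have "n \<le> card ?B" by simp
  then obtain L where L: "L \<subseteq> ?B" "card L = n" "finite L" by (rule obtain_subset_with_card_n)
  then obtain h where h: "bij_betw h {0..<n} L" using ex_bij_betw_nat_finite by blast
  have uxv: "u \<in> verts H" "x \<in> verts H" "u \<noteq> x" using edge_verts[OF g ux] by auto
  define f where "f k = (if k = 0 then (u, i) else (x, h (k - 1)))" for k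
  have hL: "k \<in> {1..n} \<Longrightarrow> h (k - 1) \<in> L" for k using h unfolding bij_betw_def by auto
  have hw: "k \<in> {1..n} \<Longrightarrow> h (k - 1) < w x" for k using hL L by blast
  have hinj: "k = k'" if kk: "k \<in> {1..n}" "k' \<in> {1..n}" "h (k - 1) = h (k' - 1)" for k k'
  proof -
    have "k - 1 \<in> {0..<n}" "k' - 1 \<in> {0..<n}" using kk by auto
    then have "k - 1 = k' - 1" using h kk(3) unfolding bij_betw_def inj_on_def by blast
    then show ?thesis using kk by auto
  qed
  have edge_iff: "{f a, f b} \<in> edges (wblow H w) \<longleftrightarrow> {a, b} \<in> edges (star n)"
    if "a \<in> {0..n}" "b \<in> {0..n}" for a b
  proof -
    have A: "{f a, f b} \<in> edges (wblow H w) \<longleftrightarrow> {fst (f a), fst (f b)} \<in> edges H \<and> snd (f a) < w (fst (f a)) \<and> snd (f b) < w (fst (f b))"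
      using wblow_edge[of "fst (f a)" "snd (f a)" "fst (f b)" "snd (f b)"] by simp
    have "{x, x} \<notin> edges H" "{u, u} \<notin> edges H" using no_loop[OF g] by auto
    moreover have "{x, u} \<in> edges H" using ux by (simp add: insert_commute)
    moreover note hw
    ultimately show ?thesis using that iu ux unfolding A star_edge by (auto simp: f_def)
  qed
  have "mono_induced_copy (wblow H w) (star n) c False"
    unfolding mono_induced_copy_def star_verts
  proof (intro exI[of _ f] conjI ballI)
    show "inj_on f {0..n}"
      unfolding inj_on_def f_def using hinj uxv(3) by auto
    show "f ` {0..n} \<subseteq> verts (wblow H w)"
      using hw iu uxv unfolding f_def wblow_verts by auto
    fix a b assume ab: "a \<in> {0..n}" "b \<in> {0..n}"
    show "({a, b} \<in> edges (star n)) = ({f a, f b} \<in> edges (wblow H w))"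
      using edge_iff[OF ab] by simp
    show "{f a, f b} \<in> edges (wblow H w) \<longrightarrow> c {f a, f b} = False"
    proof
      assume "{f a, f b} \<in> edges (wblow H w)"
      then have "(a = 0 \<and> b \<in> {1..n}) \<or> (b = 0 \<and> a \<in> {1..n})"
        using edge_iff[OF ab] ab unfolding star_edge by auto
      then show "c {f a, f b} = False"
        using hL L unfolding f_def by (auto simp: insert_commute)
    qed
  qed
  with nb show False by simp
qed

primrec wt :: "'a set set \<Rightarrow> nat \<Rightarrow> nat \<Rightarrow> 'a list \<Rightarrow> 'a \<Rightarrow> nat" where
  "wt E n s [] = (\<lambda>_. 0)"
| "wt E n s (x # ys) = (wt E n s ys)(x := s * (1 + (n - 1) * card {u \<in> set ys. {u, x} \<in> E}))"

lemma card_new_edges: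
  assumes E: "\<forall>e\<in>E. \<exists>a b. e = {a, b} \<and> a \<noteq> b" and x: "x \<notin> Y" and fY: "finite Y"
  shows "card {e \<in> E. e \<subseteq> insert x Y} = card {e \<in> E. e \<subseteq> Y} + card {u \<in> Y. {u, x} \<in> E}"
proof -
  have eq: "{e \<in> E. e \<subseteq> insert x Y} = {e \<in> E. e \<subseteq> Y} \<union> (\<lambda>u. {u, x}) ` {u \<in> Y. {u, x} \<in> E}"
  proof (rule set_eqI, rule iffI)
    fix e assume e: "e \<in> {e \<in> E. e \<subseteq> insert x Y}"
    have "e \<in> E" using e by simp
    then obtain a b where ab: "e = {a, b}" "a \<noteq> b" using E by meson
    show "e \<in> {e \<in> E. e \<subseteq> Y} \<union> (\<lambda>u. {u, x}) ` {u \<in> Y. {u, x} \<in> E}"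
    proof (cases "x \<in> e")
      case True
      then have "a = x \<or> b = x" using ab by auto
      then obtain u where u: "e = {u, x}" "u \<noteq> x"
      proof
        assume "a = x" then show thesis using that[of b] ab by (simp add: insert_commute)
      next
        assume "b = x" then show thesis using that[of a] ab by simp
      qed
      then have "u \<in> Y" "{u, x} \<in> E" using e by auto
      then show ?thesis using u by blast
    next
      case False
      then show ?thesis using e by auto
    qed
  qed auto
  have fin: "finite {e \<in> E. e \<subseteq> Y}"
    by (rule finite_subset[of _ "Pow Y"]) (use fY in auto)
  have disj: "{e \<in> E. e \<subseteq> Y} \<inter> (\<lambda>u. {u, x}) ` {u \<in> Y. {u, x} \<in> E} = {}" using x by auto
  have inj: "inj_on (\<lambda>u. {u, x}) {u \<in> Y. {u, x} \<in> E}"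
    using x unfolding inj_on_def by (auto simp: doubleton_eq_iff)
  show ?thesis unfolding eq
    by (subst card_Un_disjoint) (use fin fY disj inj in \<open>auto simp: card_image\<close>)
qed

lemma wt_other: "x \<notin> set ys \<Longrightarrow> v \<in> set ys \<Longrightarrow> wt E n s (x # ys) v = wt E n s ys v"
  by auto

lemma wt_sum:
  assumes E: "\<forall>e\<in>E. \<exists>a b. e = {a, b} \<and> a \<noteq> b"
  shows "distinct xs \<Longrightarrow> (\<Sum>v\<in>set xs. wt E n s xs v) = s * (length xs + (n - 1) * card {e \<in> E. e \<subseteq> set xs})"
proof (induction xs)
  case Nil
  have "{e \<in> E. e \<subseteq> {}} = {}" using E by auto
  then show ?case by simp
next
  case (Cons x ys)
  let ?d = "card {u \<in> set ys. {u, x} \<in> E}"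
  have xn: "x \<notin> set ys" using Cons by simp
  have "(\<Sum>v\<in>set (x # ys). wt E n s (x # ys) v) = wt E n s (x # ys) x + (\<Sum>v\<in>set ys. wt E n s (x # ys) v)"
    using xn by simp
  also have "(\<Sum>v\<in>set ys. wt E n s (x # ys) v) = (\<Sum>v\<in>set ys. wt E n s ys v)"
    by (rule sum.cong) (use xn in auto)
  also have "\<dots> = s * (length ys + (n - 1) * card {e \<in> E. e \<subseteq> set ys})" using Cons by simp
  also have "wt E n s (x # ys) x = s * (1 + (n - 1) * ?d)" by simp
  finally have "(\<Sum>v\<in>set (x # ys). wt E n s (x # ys) v) = s * (length (x # ys) + (n - 1) * (card {e \<in> E. e \<subseteq> set ys} + ?d))"
    by (simp add: algebra_simps)
  then show ?case using card_new_edges[OF E xn] by simp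
qed


lemma greedy:
  assumes g: "graph H" and nb: "\<not> mono_induced_copy (wblow H w) (star n) c False"
  shows "distinct ys \<Longrightarrow> set ys \<subseteq> verts H \<Longrightarrow> (\<forall>v\<in>set ys. wt (edges H) n s ys v \<le> w v) \<Longrightarrow>
    \<exists>S. (\<forall>v\<in>set ys. S v \<subseteq> {..<w v} \<and> card (S v) = s) \<and>
        (\<forall>u\<in>set ys. \<forall>v\<in>set ys. {u, v} \<in> edges H \<longrightarrow> (\<forall>i\<in>S u. \<forall>j\<in>S v. c {(u, i), (v, j)}))"
proof (induction ys)
  case Nil
  show ?case by simp
next
  case (Cons x ys)
  have xn: "x \<notin> set ys" using Cons.prems(1) by simp
  have d: "distinct ys" using Cons.prems(1) by simp
  have sub: "set ys \<subseteq> verts H" using Cons.prems(2) by simp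
  have le: "\<forall>v\<in>set ys. wt (edges H) n s ys v \<le> w v"
  proof
    fix v assume v: "v \<in> set ys"
    then have "wt (edges H) n s (x # ys) v \<le> w v" using Cons.prems(3) by simp
    then show "wt (edges H) n s ys v \<le> w v" using wt_other[OF xn v] by simp
  qed
  obtain S where S1: "\<forall>v\<in>set ys. S v \<subseteq> {..<w v} \<and> card (S v) = s"
    and S2: "\<forall>u\<in>set ys. \<forall>v\<in>set ys. {u, v} \<in> edges H \<longrightarrow> (\<forall>i\<in>S u. \<forall>j\<in>S v. c {(u, i), (v, j)})"
    using Cons.IH[OF d sub le] by blast
  define N where "N = {u \<in> set ys. {u, x} \<in> edges H}"
  define Bad where "Bad = (\<Union>u\<in>N. \<Union>i\<in>S u. {j. j < w x \<and> \<not> c {(u, i), (x, j)}})"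
  have finN: "finite N" unfolding N_def by simp
  have cU: "card (\<Union>i\<in>S u. {j. j < w x \<and> \<not> c {(u, i), (x, j)}}) \<le> s * (n - 1)" if u: "u \<in> N" for u
  proof -
    have uy: "u \<in> set ys" "{u, x} \<in> edges H" using u unfolding N_def by auto
    have Su: "S u \<subseteq> {..<w u}" "card (S u) = s" using S1 uy(1) by auto
    have fS: "finite (S u)" using Su(1) finite_subset by blast
    have "card (\<Union>i\<in>S u. {j. j < w x \<and> \<not> c {(u, i), (x, j)}}) \<le> (\<Sum>i\<in>S u. card {j. j < w x \<and> \<not> c {(u, i), (x, j)}})"
      by (rule card_UN_le[OF fS])
    also have "\<dots> \<le> of_nat (card (S u)) * (n - 1)"
    proof (rule sum_bounded_above)
      fix i assume "i \<in> S u"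
      then have "i < w u" using Su by auto
      then show "card {j. j < w x \<and> \<not> c {(u, i), (x, j)}} \<le> n - 1"
        using few_blue[OF g uy(2) _ nb] by blast
    qed
    finally show ?thesis using Su(2) by simp
  qed
  have cB: "card Bad \<le> card N * (s * (n - 1))"
  proof -
    have "card Bad \<le> (\<Sum>u\<in>N. card (\<Union>i\<in>S u. {j. j < w x \<and> \<not> c {(u, i), (x, j)}}))"
      unfolding Bad_def by (rule card_UN_le[OF finN])
    also have "\<dots> \<le> of_nat (card N) * (s * (n - 1))"
      by (rule sum_bounded_above) (rule cU)
    finally show ?thesis by simp
  qed
  have wx: "s * (1 + (n - 1) * card N) \<le> w x"
    using Cons.prems(3) unfolding N_def by simp
  have finB: "finite Bad" by (rule finite_subset[of _ "{..<w x}"]) (auto simp: Bad_def)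
  have "s \<le> w x - card Bad"
  proof -
    have "card N * (s * (n - 1)) = s * ((n - 1) * card N)" by simp
    then show ?thesis using wx cB by (simp add: algebra_simps)
  qed
  also have "w x - card Bad \<le> card ({..<w x} - Bad)"
    using diff_card_le_card_Diff[OF finB, of "{..<w x}"] by simp
  finally have "s \<le> card ({..<w x} - Bad)" .
  then obtain T where T: "T \<subseteq> {..<w x} - Bad" "card T = s" "finite T"
    by (rule obtain_subset_with_card_n)
  have good: "c {(v, j), (x, i)}" if "v \<in> N" "j \<in> S v" "i \<in> T" for v i j
  proof -
    have "i \<notin> Bad" "i < w x" using T that(3) by auto
    then show ?thesis using that(1,2) unfolding Bad_def by blast
  qed
  define S' where "S' = S(x := T)"
  have P1: "\<forall>v\<in>set (x # ys). S' v \<subseteq> {..<w v} \<and> card (S' v) = s"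
    using S1 T xn unfolding S'_def by auto
  have P2: "\<forall>u\<in>set (x # ys). \<forall>v\<in>set (x # ys). {u, v} \<in> edges H \<longrightarrow> (\<forall>i\<in>S' u. \<forall>j\<in>S' v. c {(u, i), (v, j)})"
  proof (intro ballI impI)
    fix u v i j assume uv: "u \<in> set (x # ys)" "v \<in> set (x # ys)" "{u, v} \<in> edges H"
      and ij0: "i \<in> S' u" "j \<in> S' v"
    have ij: "i \<in> (S(x := T)) u" "j \<in> (S(x := T)) v" using ij0 unfolding S'_def .
    show "c {(u, i), (v, j)}"
    proof (cases "u = x")
      case True
      then have "v \<noteq> x" using uv(3) no_loop[OF g] by auto
      then have "v \<in> N" using uv True unfolding N_def by (auto simp: insert_commute)
      moreover have "j \<in> S v" "i \<in> T" using ij True \<open>v \<noteq> x\<close> by auto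
      ultimately show ?thesis using good True by (simp add: insert_commute)
    next
      case False
      show ?thesis
      proof (cases "v = x")
        case True
        then have "u \<in> N" using uv False unfolding N_def by auto
        moreover have "i \<in> S u" "j \<in> T" using ij True False by auto
        ultimately show ?thesis using good True by simp
      next
        case False2: False
        then show ?thesis using False uv ij S2 by auto
      qed
    qed
  qed
  show ?case using P1 P2 by blast
qed


lemma blowup_verts: "verts (blowup H s) = verts H \<times> {0..<s}"
  by (simp add: blowup_def verts_def)

lemma red_copy:
  assumes g: "graph H" and S1: "\<forall>v\<in>verts H. S v \<subseteq> {..<w v} \<and> card (S v) = s"
    and S2: "\<forall>u\<in>verts H. \<forall>v\<in>verts H. {u, v} \<in> edges H \<longrightarrow> (\<forall>i\<in>S u. \<forall>j\<in>S v. c {(u, i), (v, j)})"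
  shows "mono_induced_copy (wblow H w) (blowup H s) c True"
proof -
  have "\<forall>v\<in>verts H. \<exists>h. bij_betw h {0..<s} (S v)"
  proof
    fix v assume v: "v \<in> verts H"
    then have "finite (S v)" "card (S v) = s" using S1 finite_subset[of "S v" "{..<w v}"] by auto
    then show "\<exists>h. bij_betw h {0..<s} (S v)" using ex_bij_betw_nat_finite by metis
  qed
  then obtain h where h: "\<forall>v\<in>verts H. bij_betw (h v) {0..<s} (S v)" by metis
  have hS: "h v k \<in> S v" if "v \<in> verts H" "k < s" for v k
  proof -
    have "k \<in> {0..<s}" using that by simp
    then have "h v k \<in> h v ` {0..<s}" by (rule imageI)
    then show ?thesis using h that(1) unfolding bij_betw_def by blast
  qed
  have hw: "h v k < w v" if "v \<in> verts H" "k < s" for v k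
    using hS[OF that] S1 that(1) by auto
  define f where "f p = (fst p, h (fst p) (snd p))" for p :: "'a \<times> nat"
  show ?thesis unfolding mono_induced_copy_def
  proof (intro exI[of _ f] conjI ballI)
    show "inj_on f (verts (blowup H s))"
    proof (rule inj_onI)
      fix p q assume p: "p \<in> verts (blowup H s)" and q: "q \<in> verts (blowup H s)" and e: "f p = f q"
      have 1: "fst p = fst q" using e unfolding f_def by simp
      have 2: "h (fst p) (snd p) = h (fst p) (snd q)" using e 1 unfolding f_def by simp
      have "snd p \<in> {0..<s}" "snd q \<in> {0..<s}" "fst p \<in> verts H" using p q unfolding blowup_verts by auto
      then have "snd p = snd q" using h 2 unfolding bij_betw_def inj_on_def by blast
      then show "p = q" using 1 by (simp add: prod_eq_iff)
    qed
    show "f ` verts (blowup H s) \<subseteq> verts (wblow H w)"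
      using hw unfolding blowup_verts wblow_verts f_def by auto
    fix p q assume p: "p \<in> verts (blowup H s)" and q: "q \<in> verts (blowup H s)"
    obtain a k where pa: "p = (a, k)" by (cases p)
    obtain b l where qb: "q = (b, l)" by (cases q)
    have ak: "a \<in> verts H" "k < s" "b \<in> verts H" "l < s" using p q pa qb unfolding blowup_verts by auto
    have fp: "f p = (a, h a k)" "f q = (b, h b l)" using pa qb unfolding f_def by auto
    show "({p, q} \<in> edges (blowup H s)) = ({f p, f q} \<in> edges (wblow H w))"
      unfolding fp unfolding pa qb blowup1_edge wblow_edge using ak hw by auto
    show "{f p, f q} \<in> edges (wblow H w) \<longrightarrow> c {f p, f q} = True"
      unfolding fp wblow_edge using ak hS S2 by auto
  qed
qed


lemma main_constr:
  assumes g: "graph H" and n: "n \<ge> 1"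
  shows "\<exists>F :: nat graph. graph F \<and> card (verts F) = s * (card (edges H) * (n - 1) + card (verts H)) \<and>
           ind_arrows F (blowup H s) (star n)"
proof -
  have finV: "finite (verts H)" using g unfolding graph_def by simp
  obtain xs where xs: "set xs = verts H" "distinct xs" using finite_distinct_list[OF finV] by blast
  define w where "w = wt (edges H) n s xs"
  define F0 where "F0 = wblow H w"
  have gF0: "graph F0" unfolding F0_def by (rule wblow_graph[OF g])
  have Eok: "\<forall>e\<in>edges H. \<exists>a b. e = {a, b} \<and> a \<noteq> b"
  proof
    fix e assume "e \<in> edges H"
    then show "\<exists>a b. e = {a, b} \<and> a \<noteq> b" using g unfolding graph_def by meson
  qed
  have Esub: "{e \<in> edges H. e \<subseteq> set xs} = edges H" using edge_sub[OF g] xs(1) by auto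
  have "card (verts F0) = (\<Sum>v\<in>verts H. card {..<w v})"
    unfolding F0_def wblow_verts by (rule card_SigmaI) (use finV in auto)
  also have "\<dots> = (\<Sum>v\<in>set xs. wt (edges H) n s xs v)" using xs(1) w_def by simp
  also have "\<dots> = s * (length xs + (n - 1) * card (edges H))"
    using wt_sum[OF Eok xs(2), of n s] Esub by simp
  also have "length xs = card (verts H)" using distinct_card[OF xs(2)] xs(1) by simp
  finally have cardF0: "card (verts F0) = s * (card (edges H) * (n - 1) + card (verts H))"
    by (simp add: algebra_simps)
  have arr: "ind_arrows F0 (blowup H s) (star n)"
    unfolding ind_arrows_def
  proof
    fix c
    show "mono_induced_copy F0 (blowup H s) c True \<or> mono_induced_copy F0 (star n) c False"
    proof (cases "mono_induced_copy F0 (star n) c False")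
      case True
      then show ?thesis by simp
    next
      case False
      have nb: "\<not> mono_induced_copy (wblow H w) (star n) c False" using False unfolding F0_def .
      have le: "\<forall>v\<in>set xs. wt (edges H) n s xs v \<le> w v" unfolding w_def by simp
      have ss: "set xs \<subseteq> verts H" using xs(1) by simp
      obtain S where S1: "\<forall>v\<in>set xs. S v \<subseteq> {..<w v} \<and> card (S v) = s"
        and S2: "\<forall>u\<in>set xs. \<forall>v\<in>set xs. {u, v} \<in> edges H \<longrightarrow> (\<forall>i\<in>S u. \<forall>j\<in>S v. c {(u, i), (v, j)})"
        using greedy[OF g nb xs(2) ss le] by blast
      have "mono_induced_copy (wblow H w) (blowup H s) c True"
        by (rule red_copy[OF g S1[unfolded xs(1)] S2[unfolded xs(1)]])
      then show ?thesis unfolding F0_def by simp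
    qed
  qed
  have finF0: "finite (verts F0)" using gF0 unfolding graph_def by simp
  obtain gg where gg: "bij_betw gg (verts F0) {0..<card (verts F0)}"
    using ex_bij_betw_finite_nat[OF finF0] by blast
  have ig: "inj_on gg (verts F0)" using gg unfolding bij_betw_def by simp
  define F where "F = (gg ` verts F0, (`) gg ` edges F0)"
  have "graph F" unfolding F_def by (rule graph_transport[OF gF0 ig])
  moreover have "ind_arrows F (blowup H s) (star n)" unfolding F_def by (rule ind_transport[OF gF0 ig arr])
  moreover have "card (verts F) = card (verts F0)"
    unfolding F_def verts_def[of "(_, _)"] fst_conv using card_image[OF ig] by (simp add: verts_def)
  ultimately have "graph F \<and> card (verts F) = s * (card (edges H) * (n - 1) + card (verts H)) \<and>
           ind_arrows F (blowup H s) (star n)" using cardF0 by simp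
  then show ?thesis by blast
qed

lemma IR_le:
  fixes F :: "nat graph"
  assumes "graph F" "card (verts F) = m" "ind_arrows F X Y" 
  shows "IR X Y \<le> m"
  unfolding IR_def by (rule Least_le) (use assms in blast)

theorem lemma2:
  fixes H :: "'a graph" and n s :: nat
  assumes "graph H" and "n \<ge> 1" and "s \<ge> 1"
  shows "IR H (star n) \<le> card (edges H) * (n - 1) + card (verts H) \<and>
         IR (blowup H s) (star n) \<le> s * (card (edges H) * (n - 1) + card (verts H))"
proof
  obtain F :: "nat graph" where F: "graph F" "card (verts F) = 1 * (card (edges H) * (n - 1) + card (verts H))"
    "ind_arrows F (blowup H 1) (star n)"
    using main_constr[OF assms(1,2), of 1] by blast
  show "IR H (star n) \<le> card (edges H) * (n - 1) + card (verts H)"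
    using IR_le[OF F(1) F(2) blowup1[OF F(3)]] by simp
next
  obtain F :: "nat graph" where F: "graph F" "card (verts F) = s * (card (edges H) * (n - 1) + card (verts H))"
    "ind_arrows F (blowup H s) (star n)"
    using main_constr[OF assms(1,2), of s] by blast
  show "IR (blowup H s) (star n) \<le> s * (card (edges H) * (n - 1) + card (verts H))"
    using IR_le[OF F] .
qed

end
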